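(* Let $A$ be an $n\times n$ irreducible doubly stochastic matrix ($n\ge2$). Then \[ \mu(A)\ge1-2\cdot\phi(A). \]
   Context: For nonempty $S\subseteq[n]$, $\mathbf 1_S$ is its indicator vector and $\mathbf 1'_S=\mathbf 1_S/|S|$. Define $\mu_S(A)=\frac12\|A\mathbf 1'_S-A\mathbf 1'_{\overline S}\|_1$ and $\mu(A)=\max_{S:\,1\le|S|\le n/2}\mu_S(A)$. Edge expansion: $\phi(A)=\min_{S:\,1\le|S|\le n/2}\frac1{|S|}\sum_{i\in S,j\notin S}A_{i,j}$. *)

theory Defs
  imports "HOL-Analysis.Analysis"
begin

text \<open>n x n real matrices are represented as functions nat => nat => real,
  with indices ranging over {0..<n} (the paper's [n]).\<close>

definition doubly_stochastic :: "nat \<Rightarrow> (nat \<Rightarrow> nat \<Rightarrow> real) \<Rightarrow> bool" where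
  "doubly_stochastic n A \<longleftrightarrow>
     (\<forall>i<n. \<forall>j<n. A i j \<ge> 0) \<and>
     (\<forall>i<n. (\<Sum>j<n. A i j) = 1) \<and>
     (\<forall>j<n. (\<Sum>i<n. A i j) = 1)"

text \<open>Irreducible: there is no partition of the index set into a nonempty proper
  subset S and its complement such that the block A[S, complement S] vanishes
  (equivalently, A cannot be permuted into block upper triangular form).\<close>
definition irreducible_mat :: "nat \<Rightarrow> (nat \<Rightarrow> nat \<Rightarrow> real) \<Rightarrow> bool" where
  "irreducible_mat n A \<longleftrightarrow>
     (\<forall>S. S \<subseteq> {..<n} \<and> S \<noteq> {} \<and> S \<noteq> {..<n} \<longrightarrow>
        (\<exists>i\<in>S. \<exists>j\<in>{..<n} - S. A i j \<noteq> 0))"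

definition ind_norm :: "nat set \<Rightarrow> nat \<Rightarrow> real" where
  "ind_norm S j = (if j \<in> S then 1 / real (card S) else 0)"

definition mat_vec :: "nat \<Rightarrow> (nat \<Rightarrow> nat \<Rightarrow> real) \<Rightarrow> (nat \<Rightarrow> real) \<Rightarrow> nat \<Rightarrow> real" where
  "mat_vec n A x i = (\<Sum>j<n. A i j * x j)"

definition mu_S :: "nat \<Rightarrow> (nat \<Rightarrow> nat \<Rightarrow> real) \<Rightarrow> nat set \<Rightarrow> real" where
  "mu_S n A S = (1/2) * (\<Sum>i<n. \<bar>mat_vec n A (ind_norm S) i - mat_vec n A (ind_norm ({..<n} - S)) i\<bar>)"

definition admissible_cuts :: "nat \<Rightarrow> nat set set" where
  "admissible_cuts n = {S. S \<subseteq> {..<n} \<and> 1 \<le> card S \<and> 2 * card S \<le> n}"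

definition mu :: "nat \<Rightarrow> (nat \<Rightarrow> nat \<Rightarrow> real) \<Rightarrow> real" where
  "mu n A = Max ((mu_S n A) ` admissible_cuts n)"

definition edge_expansion :: "nat \<Rightarrow> (nat \<Rightarrow> nat \<Rightarrow> real) \<Rightarrow> real" where
  "edge_expansion n A = Min ((\<lambda>S. (\<Sum>i\<in>S. \<Sum>j\<in>{..<n} - S. A i j) / real (card S)) ` admissible_cuts n)"

end

theory Submission
  imports Defs
begin

lemma key:
  fixes n :: nat and A :: "nat \<Rightarrow> nat \<Rightarrow> real"
  assumes ds: "doubly_stochastic n A"
    and S: "S \<in> admissible_cuts n"
  shows "mu_S n A S \<ge> 1 - 2 * ((\<Sum>i\<in>S. \<Sum>j\<in>{..<n} - S. A i j) / real (card S))"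
proof -
  define T where "T = {..<n} - S"
  define s where "s = real (card S)"
  define t where "t = real (card T)"
  have Ssub: "S \<subseteq> {..<n}" and s1: "1 \<le> card S" and s2: "2 * card S \<le> n"
    using S by (auto simp: admissible_cuts_def)
  have finS: "finite S" using Ssub finite_subset by blast
  have finT: "finite T" by (simp add: T_def)
  have cT: "card T = n - card S" unfolding T_def using Ssub finS by (simp add: card_Diff_subset)
  have spos: "s > 0" using s1 s_def by simp
  have ts: "t \<ge> s" using cT s2 s_def t_def by simp
  have tpos: "t > 0" using spos ts by simp
  have disj: "S \<inter> T = {}" and un: "S \<union> T = {..<n}" using Ssub by (auto simp: T_def)
  define r where "r i = (\<Sum>j\<in>S. A i j)" for i
  define q where "q i = (\<Sum>j\<in>T. A i j)" for i
  define e where "e = (\<Sum>i\<in>S. q i)"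
  have rq: "r i + q i = 1" if "i < n" for i
  proof -
    have "r i + q i = (\<Sum>j\<in>S \<union> T. A i j)" unfolding r_def q_def
      using sum.union_disjoint[OF finS finT disj, of "A i"] by simp
    also have "\<dots> = 1" using ds that un by (simp add: doubly_stochastic_def)
    finally show ?thesis .
  qed
  have col: "(\<Sum>i\<in>S. A i j) + (\<Sum>i\<in>T. A i j) = 1" if "j < n" for j
  proof -
    have "(\<Sum>i\<in>S. A i j) + (\<Sum>i\<in>T. A i j) = (\<Sum>i\<in>S \<union> T. A i j)"
      using sum.union_disjoint[OF finS finT disj, of "\<lambda>i. A i j"] by simp
    also have "\<dots> = 1" using ds that un by (simp add: doubly_stochastic_def)
    finally show ?thesis .
  qed
  have e0: "e \<ge> 0" unfolding e_def q_def
    using ds Ssub un by (auto simp: doubly_stochastic_def intro!: sum_nonneg)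
  have sumSr: "(\<Sum>i\<in>S. r i) = s - e"
  proof -
    have "(\<Sum>i\<in>S. r i) = (\<Sum>i\<in>S. 1 - q i)" using rq Ssub by (intro sum.cong) (auto simp: algebra_simps)
    thus ?thesis by (simp add: sum_subtractf e_def s_def)
  qed
  have sumTr: "(\<Sum>i\<in>T. r i) = e"
  proof -
    have "(\<Sum>i\<in>T. r i) = (\<Sum>j\<in>S. \<Sum>i\<in>T. A i j)" unfolding r_def by (rule sum.swap)
    also have "\<dots> = (\<Sum>j\<in>S. 1 - (\<Sum>i\<in>S. A i j))" using col Ssub by (intro sum.cong) (auto simp: algebra_simps)
    also have "\<dots> = s - (\<Sum>j\<in>S. \<Sum>i\<in>S. A i j)"
      by (simp add: sum_subtractf s_def)
    also have "(\<Sum>j\<in>S. \<Sum>i\<in>S. A i j) = (\<Sum>i\<in>S. r i)" unfolding r_def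
      by (rule sum.swap)
    finally show ?thesis using sumSr by simp
  qed
  have sumTq: "(\<Sum>i\<in>T. q i) = t - e"
  proof -
    have "(\<Sum>i\<in>T. q i) = (\<Sum>i\<in>T. 1 - r i)" using rq by (intro sum.cong) (auto simp: T_def algebra_simps)
    thus ?thesis using sumTr by (simp add: sum_subtractf t_def)
  qed
  have mv: "mat_vec n A (ind_norm X) i = (\<Sum>j\<in>X. A i j) / real (card X)" if "X \<subseteq> {..<n}" for X i
  proof -
    have "mat_vec n A (ind_norm X) i = (\<Sum>j<n. if j \<in> X then A i j / real (card X) else 0)"
      unfolding mat_vec_def ind_norm_def by (intro sum.cong) auto
    also have "\<dots> = (\<Sum>j\<in>{..<n} \<inter> X. A i j / real (card X))" by (rule sum.inter_restrict[symmetric]) simp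
    also have "{..<n} \<inter> X = X" using that by auto
    finally show ?thesis by (simp add: sum_divide_distrib)
  qed
  define v where "v i = r i / s - q i / t" for i
  have vdef: "mat_vec n A (ind_norm S) i - mat_vec n A (ind_norm ({..<n} - S)) i = v i" for i
    using mv[OF Ssub, of i] mv[of "{..<n} - S" i] unfolding v_def r_def q_def s_def t_def T_def by simp
  have "(\<Sum>i<n. \<bar>v i\<bar>) = (\<Sum>i\<in>S. \<bar>v i\<bar>) + (\<Sum>i\<in>T. \<bar>v i\<bar>)"
    using sum.union_disjoint[OF finS finT disj, of "\<lambda>i. \<bar>v i\<bar>"] un by simp
  also have "\<dots> \<ge> (\<Sum>i\<in>S. v i) - (\<Sum>i\<in>T. v i)"
  proof -
    have "(\<Sum>i\<in>S. v i) \<le> (\<Sum>i\<in>S. \<bar>v i\<bar>)" by (intro sum_mono) simp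
    moreover have "- (\<Sum>i\<in>T. v i) \<le> (\<Sum>i\<in>T. \<bar>v i\<bar>)"
      by (simp add: sum_negf[symmetric]) (intro sum_mono, simp)
    ultimately show ?thesis by linarith
  qed
  finally have ge: "(\<Sum>i<n. \<bar>v i\<bar>) \<ge> (\<Sum>i\<in>S. v i) - (\<Sum>i\<in>T. v i)" .
  have vS: "(\<Sum>i\<in>S. v i) = (s - e) / s - e / t"
    unfolding v_def by (simp add: sum_subtractf sum_divide_distrib[symmetric] sumSr e_def)
  have vT: "(\<Sum>i\<in>T. v i) = e / s - (t - e) / t"
    unfolding v_def by (simp add: sum_subtractf sum_divide_distrib[symmetric] sumTr sumTq)
  have "mu_S n A S = (1/2) * (\<Sum>i<n. \<bar>v i\<bar>)" unfolding mu_S_def vdef ..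
  moreover have "(1/2) * (\<Sum>i<n. \<bar>v i\<bar>) \<ge> (1/2) * ((s - e) / s - e / t - (e / s - (t - e) / t))" using ge vS vT by (intro mult_left_mono) auto
  moreover have "(1/2) * ((s - e) / s - e / t - (e / s - (t - e) / t)) = 1 - e / s - e / t"
    using spos tpos by (simp add: field_simps)
  ultimately have m: "mu_S n A S \<ge> 1 - e / s - e / t" by linarith
  have "e / t \<le> e / s" using e0 spos ts by (simp add: frac_le)
  have eq: "(\<Sum>i\<in>S. \<Sum>j\<in>{..<n} - S. A i j) = e" unfolding e_def q_def T_def ..
  show ?thesis unfolding eq s_def[symmetric] using m \<open>e / t \<le> e / s\<close> by linarith
qed

theorem lemma5p42:
  fixes n :: nat and A :: "nat \<Rightarrow> nat \<Rightarrow> real"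
  assumes "n \<ge> 2"
    and "doubly_stochastic n A"
    and "irreducible_mat n A"
  shows "mu n A \<ge> 1 - 2 * edge_expansion n A"
proof -
  have fin: "finite (admissible_cuts n)"
    by (rule finite_subset[of _ "Pow {..<n}"]) (auto simp: admissible_cuts_def)
  have ne: "{0} \<in> admissible_cuts n" using assms(1) by (auto simp: admissible_cuts_def)
  define f where "f S = (\<Sum>i\<in>S. \<Sum>j\<in>{..<n} - S. A i j) / real (card S)" for S
  have "edge_expansion n A \<in> f ` admissible_cuts n"
    unfolding edge_expansion_def f_def[abs_def] using fin ne by (intro Min_in) auto
  then obtain S where S: "S \<in> admissible_cuts n" and ee: "edge_expansion n A = f S" by auto
  have "mu_S n A S \<le> mu n A" unfolding mu_def using fin S by (intro Max_ge) auto
  moreover have "mu_S n A S \<ge> 1 - 2 * f S" unfolding f_def using key[OF assms(2) S] .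
  ultimately show ?thesis using ee by linarith
qed

end
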